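(* Let $I$ be a $Q$-interval of $\mathcal{P}$ with $D(I)=\{x_1,\ldots,x_r\}$ that is a $b$-nested common interval. Then at most one of the intervals $Int(x_i)$, $1\leq i\leq r$, is $b$-large, and if such an interval exists, it is a $b$-nested common interval.
   Context: Let $n\geq 1$, $K\geq 1$ and let $\mathcal{P}=\{P_1,\ldots,P_K\}$ be permutations of $\{1,\ldots,n\}$ with $P_1=(1,2,\ldots,n)$. For integers $i\leq j$ write $(i..j)=\{i,\ldots,j\}$. A common interval of $\mathcal{P}$ is a set of integers occupying consecutive positions in every $P_k$; all have the form $(i..j)$, and singletons and $(1..n)$ are common. Fix a positive integer $b$. A common interval $I$ is $b$-small if $|I|\leq b$, $b$-large otherwise; it is $b$-nested if $|I|=1$ or $I$ strictly contains a $b$-nested common interval $J$ with $|J|\geq|I|-b$ (recursive on size). Two intervals $(i..j)$, $(k..l)$ overlap if $i<k\leq j<l$ or $k<i\leq l<j$. A common interval is strong if it overlaps no other common interval. The PQ-tree $T$: nodes are the strong common intervals ($Int(x)$ is the interval of node $x$), root $(1..n)$, leaves the singletons, parent of $y$ is the node whose interval is the smallest strong common interval strictly containing $Int(y)$. A node $x$ with children set $D$ is a $P$-node if no union $\bigcup_{z\in D'}Int(z)$, $D'\subset D$, $2\leq|D'|<|D|$, is common; otherwise it is a $Q$-node with children ordered $y_1,\ldots,y_r$ so that $\max Int(y_i)+1=\min Int(y_{i+1})$. It is known that a set is a common interval iff it is $Int(x)$ for a node $x$ or the union of the intervals of consecutive children of a unique $Q$-node. The domain $D(I)$ of a common interval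 $I$ is the set of children of $x$ if $I=Int(x)$ is strong, and otherwise the set of consecutive children of the $Q$-node whose intervals have union $I$. A $P$-interval is a strong common interval $Int(x)$ with $x$ a $P$-node; all other common intervals are $Q$-intervals. *)

theory Defs
  imports Main
begin

text \<open>A family of permutations of {1..n} is a list Ps of lists; each list is a
permutation (listing the elements in positional order), and the first one is
the identity (1,2,...,n).\<close>

definition perm_family :: "nat \<Rightarrow> nat list list \<Rightarrow> bool" where
  "perm_family n Ps \<longleftrightarrow> n \<ge> 1 \<and> Ps \<noteq> [] \<and> hd Ps = [1..<n+1] \<and>
     (\<forall>P\<in>set Ps. distinct P \<and> set P = {1..n})"

definition consec_in :: "nat list \<Rightarrow> nat set \<Rightarrow> bool" where
  "consec_in P S \<longleftrightarrow> (\<exists>i j. {k. k < length P \<and> P ! k \<in> S} = {i..j})"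

definition common :: "nat \<Rightarrow> nat list list \<Rightarrow> nat set \<Rightarrow> bool" where
  "common n Ps S \<longleftrightarrow> S \<noteq> {} \<and> S \<subseteq> {1..n} \<and> (\<forall>P\<in>set Ps. consec_in P S)"

definition overlap :: "nat set \<Rightarrow> nat set \<Rightarrow> bool" where
  "overlap A B \<longleftrightarrow>
     (Min A < Min B \<and> Min B \<le> Max A \<and> Max A < Max B) \<or>
     (Min B < Min A \<and> Min A \<le> Max B \<and> Max B < Max A)"

definition strong :: "nat \<Rightarrow> nat list list \<Rightarrow> nat set \<Rightarrow> bool" where
  "strong n Ps S \<longleftrightarrow> common n Ps S \<and> (\<forall>T. common n Ps T \<longrightarrow> \<not> overlap S T)"

text \<open>Children of a node X of the PQ-tree: strong intervals Y whose parent
(the smallest strong interval strictly containing Y) is X.\<close>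
definition children :: "nat \<Rightarrow> nat list list \<Rightarrow> nat set \<Rightarrow> nat set set" where
  "children n Ps X = {Y. strong n Ps Y \<and> Y \<subset> X \<and>
       (\<forall>Z. strong n Ps Z \<and> Y \<subset> Z \<longrightarrow> X \<subseteq> Z)}"

definition Pnode :: "nat \<Rightarrow> nat list list \<Rightarrow> nat set \<Rightarrow> bool" where
  "Pnode n Ps X \<longleftrightarrow> strong n Ps X \<and>
     \<not> (\<exists>D'. D' \<subset> children n Ps X \<and> 2 \<le> card D' \<and> common n Ps (\<Union>D'))"

definition Qnode :: "nat \<Rightarrow> nat list list \<Rightarrow> nat set \<Rightarrow> bool" where
  "Qnode n Ps X \<longleftrightarrow> strong n Ps X \<and> \<not> Pnode n Ps X"

definition Q_interval :: "nat \<Rightarrow> nat list list \<Rightarrow> nat set \<Rightarrow> bool" where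
  "Q_interval n Ps I \<longleftrightarrow> common n Ps I \<and> \<not> Pnode n Ps I"

definition is_domain :: "nat \<Rightarrow> nat list list \<Rightarrow> nat set \<Rightarrow> nat set set \<Rightarrow> bool" where
  "is_domain n Ps I D \<longleftrightarrow>
     (strong n Ps I \<and> D = children n Ps I) \<or>
     (common n Ps I \<and> \<not> strong n Ps I \<and>
        (\<exists>X. Qnode n Ps X \<and> D \<subseteq> children n Ps X \<and> \<Union>D = I))"

inductive b_nested :: "nat \<Rightarrow> nat list list \<Rightarrow> nat \<Rightarrow> nat set \<Rightarrow> bool"
  for n Ps b where
  single: "common n Ps I \<Longrightarrow> card I = 1 \<Longrightarrow> b_nested n Ps b I"
| step: "common n Ps I \<Longrightarrow> b_nested n Ps b J \<Longrightarrow> J \<subset> I \<Longrightarrow>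
           card I \<le> card J + b \<Longrightarrow> b_nested n Ps b I"

definition b_large :: "nat \<Rightarrow> nat set \<Rightarrow> bool" where
  "b_large b I \<longleftrightarrow> card I > b"

end

theory Submission
  imports Defs
begin

lemma common_finite: "common n Ps S \<Longrightarrow> finite S"
  unfolding common_def using finite_subset by blast

lemma common_interval:
  assumes pf: "perm_family n Ps" and c: "common n Ps S"
  shows "S = {Min S..Max S}"
proof -
  have ne: "S \<noteq> {}" and sub: "S \<subseteq> {1..n}" using c unfolding common_def by auto
  have fin: "finite S" using sub finite_subset by blast
  have h1: "Ps \<noteq> []" and h: "hd Ps = [1..<n+1]" using pf unfolding perm_family_def by blast+
  have "hd Ps \<in> set Ps" using h1 by simp
  hence "[1..<n+1] \<in> set Ps" using h by simp
  hence "consec_in [1..<n+1] S" using c unfolding common_def by blast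
  then obtain i j where ij: "{k. k < length [1..<n+1] \<and> [1..<n+1] ! k \<in> S} = {i..j}"
    unfolding consec_in_def by blast
  have eq: "{k. k < n \<and> Suc k \<in> S} = {i..j}"
  proof -
    have "{k. k < length [1..<n+1] \<and> [1..<n+1] ! k \<in> S} = {k. k < n \<and> Suc k \<in> S}"
      by (auto simp del: upt_Suc simp add: nth_upt)
    thus ?thesis using ij by simp
  qed
  have mn: "Min S \<in> S" "Max S \<in> S" using fin ne by auto
  show ?thesis
  proof
    show "S \<subseteq> {Min S..Max S}" using fin by auto
    show "{Min S..Max S} \<subseteq> S"
    proof
      fix x assume x: "x \<in> {Min S..Max S}"
      have m1: "1 \<le> Min S" "Min S \<le> n" "1 \<le> Max S" "Max S \<le> n" using mn sub by auto
      have a: "Min S - 1 \<in> {k. k < n \<and> Suc k \<in> S}" using mn m1 by auto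
      have b: "Max S - 1 \<in> {k. k < n \<and> Suc k \<in> S}" using mn m1 by auto
      have "x - 1 \<in> {i..j}" using a b x unfolding eq by auto
      hence "Suc (x - 1) \<in> S" unfolding eq[symmetric] by auto
      moreover have "x \<ge> 1" using x mn sub by fastforce
      ultimately show "x \<in> S" by simp
    qed
  qed
qed

lemma geo:
  assumes pf: "perm_family n Ps" and cJ: "common n Ps J" and sY: "strong n Ps Y"
    and int: "J \<inter> Y \<noteq> {}" and nsub: "\<not> J \<subseteq> Y"
  shows "Y \<subseteq> J"
proof -
  have cY: "common n Ps Y" using sY unfolding strong_def by auto
  have no: "\<not> overlap Y J" using sY cJ unfolding strong_def by auto
  have J: "J = {Min J..Max J}" using common_interval[OF pf cJ] .
  have Y: "Y = {Min Y..Max Y}" using common_interval[OF pf cY] .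
  define a where "a = Min J" define b where "b = Max J"
  define c where "c = Min Y" define d where "d = Max Y"
  have J': "J = {a..b}" and Y': "Y = {c..d}" using J Y a_def b_def c_def d_def by auto
  from int obtain e where "e \<in> J" "e \<in> Y" by blast
  hence e: "a \<le> e" "e \<le> b" "c \<le> e" "e \<le> d" using J' Y' by auto
  have ns: "a < c \<or> d < b" using nsub J' Y' by auto
  have no': "\<not> ((c < a \<and> a \<le> d \<and> d < b) \<or> (a < c \<and> c \<le> b \<and> b < d))"
    using no unfolding overlap_def a_def b_def c_def d_def by auto
  have "a \<le> c" "d \<le> b" using e ns no' by linarith+
  thus ?thesis using J' Y' by auto
qed

lemma main:
  assumes pf: "perm_family n Ps"
  shows "b_nested n Ps b I \<Longrightarrow> (\<forall>Y\<in>D. strong n Ps Y) \<Longrightarrow> \<Union>D \<subseteq> I \<Longrightarrow>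
     (\<forall>Y\<in>D. \<forall>Y'\<in>D. Y \<noteq> Y' \<longrightarrow> Y \<inter> Y' = {}) \<Longrightarrow>
     (\<forall>Y\<in>D. \<forall>Y'\<in>D. b_large b Y \<and> b_large b Y' \<longrightarrow> Y = Y') \<and>
     (\<forall>Y\<in>D. b_large b Y \<longrightarrow> b_nested n Ps b Y)"
proof (induction I arbitrary: D rule: b_nested.induct)
  case (single I)
  have "\<forall>Y\<in>D. Y = I"
  proof
    fix Y assume "Y \<in> D"
    hence "Y \<noteq> {}" "Y \<subseteq> I" using single unfolding strong_def common_def by auto
    thus "Y = I" using single(2) by (metis card_1_singletonE subset_singletonD)
  qed
  thus ?case using b_nested.single[OF single(1,2)] by (metis (no_types))
next
  case (step I J)
  have finI: "finite I" using step.hyps(1) common_finite by blast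
  have cardJ: "card J \<le> card I" using step.hyps(3) finI by (simp add: card_mono)
  have small: "\<not> b_large b Y" if "Y \<subseteq> I - J" for Y
  proof -
    have "card Y \<le> card (I - J)" using that finI by (simp add: card_mono)
    also have "\<dots> = card I - card J" using step.hyps(3) finI
      by (meson card_Diff_subset finite_subset psubset_imp_subset)
    finally show ?thesis using step.hyps(4) unfolding b_large_def by linarith
  qed
  show ?case
  proof (cases "\<exists>Y0\<in>D. J \<subseteq> Y0")
    case True
    then obtain Y0 where Y0: "Y0 \<in> D" "J \<subseteq> Y0" by blast
    have oth: "\<not> b_large b Y'" if "Y' \<in> D" "Y' \<noteq> Y0" for Y'
    proof -
      have "Y' \<inter> Y0 = {}" using step.prems(3) that(1,2) Y0(1) by metis
      hence "Y' \<subseteq> I - J" using Y0 that step.prems(2) by auto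
      thus ?thesis by (rule small)
    qed
    have "b_nested n Ps b Y0"
    proof (cases "J = Y0")
      case True thus ?thesis using step.hyps(2) by simp
    next
      case False
      have cY: "common n Ps Y0" using step.prems(1) Y0 unfolding strong_def by auto
      have "Y0 \<subseteq> I" using Y0 step.prems(2) by auto
      hence "card Y0 \<le> card I" using finI by (simp add: card_mono)
      thus ?thesis using b_nested.step[OF cY step.hyps(2)] False Y0 step.hyps(4) by auto
    qed
    thus ?thesis using oth Y0 by metis
  next
    case False
    define D' where "D' = {Y\<in>D. Y \<inter> J \<noteq> {}}"
    have cJ: "common n Ps J" using step.hyps(2) by (cases rule: b_nested.cases) auto
    have subJ: "Y \<subseteq> J" if "Y \<in> D'" for Y
      using geo[OF pf cJ, of Y] that False step.prems(1) unfolding D'_def by auto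
    have IH: "(\<forall>Y\<in>D'. \<forall>Y'\<in>D'. b_large b Y \<and> b_large b Y' \<longrightarrow> Y = Y') \<and>
     (\<forall>Y\<in>D'. b_large b Y \<longrightarrow> b_nested n Ps b Y)"
      apply (rule step.IH) using step.prems(1,3) subJ unfolding D'_def by auto
    have out: "\<not> b_large b Y" if "Y \<in> D" "Y \<notin> D'" for Y
      apply (rule small) using that step.prems(2) unfolding D'_def by auto
    show ?thesis using IH out by metis
  qed
qed

lemma strong_ne: "strong n Ps Y \<Longrightarrow> Y \<noteq> {}"
  unfolding strong_def common_def by auto

lemma children_disj:
  assumes pf: "perm_family n Ps" and Y1: "Y1 \<in> children n Ps X" and Y2: "Y2 \<in> children n Ps X"
    and ne: "Y1 \<noteq> Y2"
  shows "Y1 \<inter> Y2 = {}"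
proof (rule ccontr)
  assume a: "Y1 \<inter> Y2 \<noteq> {}"
  have s1: "strong n Ps Y1" "Y1 \<subset> X" "\<forall>Z. strong n Ps Z \<and> Y1 \<subset> Z \<longrightarrow> X \<subseteq> Z"
    using Y1 unfolding children_def by auto
  have s2: "strong n Ps Y2" "Y2 \<subset> X" "\<forall>Z. strong n Ps Z \<and> Y2 \<subset> Z \<longrightarrow> X \<subseteq> Z"
    using Y2 unfolding children_def by auto
  have c1: "common n Ps Y1" "common n Ps Y2" using s1 s2 unfolding strong_def by auto
  show False
  proof (cases "Y1 \<subseteq> Y2")
    case True
    hence "Y1 \<subset> Y2" using ne by auto
    thus False using s1(3) s2(1,2) by auto
  next
    case False
    hence "Y2 \<subseteq> Y1" using geo[OF pf c1(1) s2(1)] a by auto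
    hence "Y2 \<subset> Y1" using ne by auto
    thus False using s2(3) s1(1,2) by auto
  qed
qed

theorem lemma4:
  fixes n b :: nat and Ps :: "nat list list" and I :: "nat set" and D :: "nat set set"
  assumes "perm_family n Ps"
    and "b > 0"
    and "Q_interval n Ps I"
    and "is_domain n Ps I D"
    and "b_nested n Ps b I"
  shows "(\<forall>Y\<in>D. \<forall>Y'\<in>D. b_large b Y \<and> b_large b Y' \<longrightarrow> Y = Y') \<and>
         (\<forall>Y\<in>D. b_large b Y \<longrightarrow> b_nested n Ps b Y)"
proof -
  obtain X where X: "D \<subseteq> children n Ps X" "\<Union>D \<subseteq> I"
    using assms(4) unfolding is_domain_def children_def by blast
  have s: "\<forall>Y\<in>D. strong n Ps Y" using X unfolding children_def by auto
  have d: "\<forall>Y\<in>D. \<forall>Y'\<in>D. Y \<noteq> Y' \<longrightarrow> Y \<inter> Y' = {}"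
    using X children_disj[OF assms(1)] by blast
  show ?thesis using main[OF assms(1) assms(5) s X(2) d] .
qed

end
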